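(* Let $D$ be a digraph and $k\ge 0$ an integer. If $\operatorname{dbw}(D)\le k$, then $\operatorname{bcrk}(\vec{L}(D))\le 2(k+1)$.
   Context: All digraphs are finite and loopless; $\vec{xy}$ denotes a directed edge from $x$ to $y$. A layout of a symmetric function $f:2^U\to\mathbb{Z}$ on a finite set $U$ is a pair $(T,\beta)$ with $T$ a tree of maximum degree at most three and $\beta$ a bijection from the leaves of $T$ to $U$; each edge of $T$ splits the leaves into two sides, with $Y$ the leaves on one side, and its order is $f(\beta(Y))$; the width of the layout is the maximum order of its edges (0 if none), and the layout-$f$-width of $U$ is the minimum width of a layout. Directed branch-width: for $X\subseteq E(D)$, $S^V_X=\{y: \exists x,z,\ \vec{xy}\in E(D)\setminus X,\ \vec{yz}\in X\}$ and $f_D(X)=|S^V_X\cup S^V_{E(D)\setminus X}|$; $\operatorname{dbw}(D)$ is the layout-$f_D$-width of $E(D)$. Directed line graph: $\vec{L}(D)$ has vertex set $E(D)$ and an edge $\vec{ef}$ whenever $e=\vec{wx}$, $f=\vec{xy}$ for some vertices $w,x,y$. Bi-cut-rank-width: with $M$ the $\mathrm{GF}(2)$ adjacency matrix of a digraph $H$ ($M_{uv}=1$ iff $\vec{uv}\in E(H)$), $g(X)=\operatorname{rk}(M[V(H)\setminus X,X])+\operatorname{rk}(M[X,V(H)\setminus X])$, and $\operatorname{bcrk}(H)$ is the layout-$g$-width of $V(H)$. *)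

theory Defs
  imports Complex_Main "HOL-Library.Z2" "HOL-Library.Function_Algebras"
begin

definition digraph :: "'v set \<Rightarrow> 'e set \<Rightarrow> ('e \<Rightarrow> 'v) \<Rightarrow> ('e \<Rightarrow> 'v) \<Rightarrow> bool" where
  "digraph V E tail head \<longleftrightarrow> finite V \<and> finite E \<and>
     (\<forall>e\<in>E. tail e \<in> V \<and> head e \<in> V \<and> tail e \<noteq> head e)"

definition tree_rel :: "nat set set \<Rightarrow> (nat \<times> nat) set" where
  "tree_rel TE = {(a, b). {a, b} \<in> TE}"

definition is_tree :: "nat set \<Rightarrow> nat set set \<Rightarrow> bool" where
  "is_tree N TE \<longleftrightarrow> finite N \<and> N \<noteq> {} \<and>
     (\<forall>e\<in>TE. \<exists>u v. e = {u, v} \<and> u \<noteq> v \<and> u \<in> N \<and> v \<in> N) \<and>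
     (\<forall>u\<in>N. \<forall>v\<in>N. (u, v) \<in> (tree_rel TE)\<^sup>*) \<and>
     \<not> (\<exists>cs. 3 \<le> length cs \<and> distinct cs \<and>
          (\<forall>i < length cs. {cs ! i, cs ! ((i + 1) mod length cs)} \<in> TE))"

definition tdegree :: "nat set set \<Rightarrow> nat \<Rightarrow> nat" where
  "tdegree TE v = card {u. {u, v} \<in> TE}"

definition tleaves :: "nat set \<Rightarrow> nat set set \<Rightarrow> nat set" where
  "tleaves N TE = {v \<in> N. tdegree TE v \<le> 1}"

definition is_layout :: "'u set \<Rightarrow> nat set \<Rightarrow> nat set set \<Rightarrow> (nat \<Rightarrow> 'u) \<Rightarrow> bool" where
  "is_layout U N TE \<beta> \<longleftrightarrow> is_tree N TE \<and> (\<forall>v\<in>N. tdegree TE v \<le> 3) \<and>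
     bij_betw \<beta> (tleaves N TE) U"

definition tside :: "nat set \<Rightarrow> nat set set \<Rightarrow> nat set \<Rightarrow> nat \<Rightarrow> nat set" where
  "tside N TE e a = {l \<in> tleaves N TE. (a, l) \<in> (tree_rel (TE - {e}))\<^sup>*}"

definition layout_width_of ::
    "('u set \<Rightarrow> nat) \<Rightarrow> nat set \<Rightarrow> nat set set \<Rightarrow> (nat \<Rightarrow> 'u) \<Rightarrow> nat" where
  "layout_width_of f N TE \<beta> =
     Max (insert 0 {f (\<beta> ` tside N TE e a) | e a. e \<in> TE \<and> a \<in> e})"

definition layout_width :: "'u set \<Rightarrow> ('u set \<Rightarrow> nat) \<Rightarrow> nat" where
  "layout_width U f =
     Inf {layout_width_of f N TE \<beta> | N TE \<beta>. is_layout U N TE \<beta>}"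

definition SV :: "'e set \<Rightarrow> ('e \<Rightarrow> 'v) \<Rightarrow> ('e \<Rightarrow> 'v) \<Rightarrow> 'e set \<Rightarrow> 'v set" where
  "SV E tail head X = {y. \<exists>e \<in> E - X. \<exists>f \<in> X. head e = y \<and> tail f = y}"

definition fD :: "'e set \<Rightarrow> ('e \<Rightarrow> 'v) \<Rightarrow> ('e \<Rightarrow> 'v) \<Rightarrow> 'e set \<Rightarrow> nat" where
  "fD E tail head X = card (SV E tail head X \<union> SV E tail head (E - X))"

definition dbw :: "'e set \<Rightarrow> ('e \<Rightarrow> 'v) \<Rightarrow> ('e \<Rightarrow> 'v) \<Rightarrow> nat" where
  "dbw E tail head = layout_width E (fD E tail head)"

definition line_adj :: "'e set \<Rightarrow> ('e \<Rightarrow> 'v) \<Rightarrow> ('e \<Rightarrow> 'v) \<Rightarrow> 'e \<Rightarrow> 'e \<Rightarrow> bool" where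
  "line_adj E tail head e f \<longleftrightarrow> e \<in> E \<and> f \<in> E \<and> head e = tail f"

text \<open>Rank over GF(2) of the submatrix M[R,C] of the adjacency matrix of adj:
  dimension of the span of its row vectors.\<close>

definition gf2_rank :: "('w \<Rightarrow> 'w \<Rightarrow> bool) \<Rightarrow> 'w set \<Rightarrow> 'w set \<Rightarrow> nat" where
  "gf2_rank adj R C =
     vector_space.dim (\<lambda>(c::bit) (x::'w \<Rightarrow> bit). (\<lambda>v. c * x v))
       {(\<lambda>v. if v \<in> C \<and> adj u v then (1::bit) else 0) | u. u \<in> R}"

definition bicut_rank :: "'w set \<Rightarrow> ('w \<Rightarrow> 'w \<Rightarrow> bool) \<Rightarrow> 'w set \<Rightarrow> nat" where
  "bicut_rank W adj X = gf2_rank adj (W - X) X + gf2_rank adj X (W - X)"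

definition bcrk :: "'w set \<Rightarrow> ('w \<Rightarrow> 'w \<Rightarrow> bool) \<Rightarrow> nat" where
  "bcrk W adj = layout_width W (bicut_rank W adj)"

end

theory Submission
  imports Defs
begin

lemma vs_bit: "vector_space (\<lambda>(c::bit) (x::'w \<Rightarrow> bit). (\<lambda>v. c * x v))"
  by unfold_locales (auto simp: fun_eq_iff algebra_simps)

lemma rank_le:
  fixes E :: "'e set" and tail head :: "'e \<Rightarrow> 'v"
  assumes fY: "finite Y"
    and H: "\<And>u v. u \<in> R \<Longrightarrow> u \<in> E \<Longrightarrow> v \<in> C \<Longrightarrow> v \<in> E \<Longrightarrow> head u = tail v \<Longrightarrow> head u \<in> Y"
  shows "gf2_rank (line_adj E tail head) R C \<le> card Y"
proof -
  interpret vector_space "\<lambda>(c::bit) (x::'e \<Rightarrow> bit). (\<lambda>v. c * x v)" by (rule vs_bit)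
  define r where "r y = (\<lambda>v. if v \<in> C \<and> v \<in> E \<and> tail v = y then (1::bit) else 0)" for y
  have sub: "{(\<lambda>v. if v \<in> C \<and> line_adj E tail head u v then (1::bit) else 0) | u. u \<in> R}
     \<subseteq> span (r ` Y)"
  proof
    fix x assume "x \<in> {(\<lambda>v. if v \<in> C \<and> line_adj E tail head u v then (1::bit) else 0) | u. u \<in> R}"
    then obtain u where u: "u \<in> R" and x: "x = (\<lambda>v. if v \<in> C \<and> line_adj E tail head u v then (1::bit) else 0)" by blast
    show "x \<in> span (r ` Y)"
    proof (cases "\<exists>v\<in>C. v \<in> E \<and> u \<in> E \<and> head u = tail v")
      case True
      then obtain v where "v \<in> C" "v \<in> E" "u \<in> E" "head u = tail v" by blast
      with H u have hy: "head u \<in> Y" by blast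
      have "x = r (head u)" using \<open>u \<in> E\<close> unfolding x r_def line_adj_def by (auto simp: fun_eq_iff)
      then show ?thesis using hy by (metis span_base imageI)
    next
      case False
      then have "x = 0" unfolding x line_adj_def by (auto simp: fun_eq_iff)
      then show ?thesis by (metis span_zero)
    qed
  qed
  have "gf2_rank (line_adj E tail head) R C \<le> card (r ` Y)"
    unfolding gf2_rank_def by (rule dim_le_card[OF sub]) (use fY in simp)
  also have "\<dots> \<le> card Y" using fY by (rule card_image_le)
  finally show ?thesis .
qed

lemma bicut_le:
  fixes E :: "'e set" and tail head :: "'e \<Rightarrow> 'v"
  assumes fE: "finite E"
  shows "bicut_rank E (line_adj E tail head) X \<le> 2 * fD E tail head X"
proof -
  have f1: "finite (SV E tail head X)"
    by (rule finite_subset[of _ "head ` E"]) (auto simp: SV_def fE)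
  have f2: "finite (SV E tail head (E - X))"
    by (rule finite_subset[of _ "head ` E"]) (auto simp: SV_def fE)
  have a: "gf2_rank (line_adj E tail head) (E - X) X \<le> card (SV E tail head X)"
    by (rule rank_le[OF f1]) (auto simp: SV_def)
  have b: "gf2_rank (line_adj E tail head) X (E - X) \<le> card (SV E tail head (E - X))"
    by (rule rank_le[OF f2]) (auto simp: SV_def)
  have c: "card (SV E tail head X) \<le> fD E tail head X"
    unfolding fD_def using f1 f2 by (intro card_mono) auto
  have d: "card (SV E tail head (E - X)) \<le> fD E tail head X"
    unfolding fD_def using f1 f2 by (intro card_mono) auto
  show ?thesis unfolding bicut_rank_def using a b c d by linarith
qed

lemma fin_sides:
  assumes L: "is_layout U N TE \<beta>"
  shows "finite {h (\<beta> ` tside N TE e a) | e a. e \<in> TE \<and> a \<in> e}"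
proof -
  have T: "is_tree N TE" using L unfolding is_layout_def by (rule conjunct1)
  have fN: "finite N" using T unfolding is_tree_def by (rule conjunct1)
  have T2: "\<forall>e\<in>TE. \<exists>u v. e = {u, v} \<and> u \<noteq> v \<and> u \<in> N \<and> v \<in> N"
    using T unfolding is_tree_def by (rule conjunct1[OF conjunct2[OF conjunct2]])
  have TE: "TE \<subseteq> Pow N"
  proof
    fix e assume "e \<in> TE"
    then obtain u v where "e = {u, v}" "u \<in> N" "v \<in> N" using T2 by meson
    then show "e \<in> Pow N" by simp
  qed
  have "{h (\<beta> ` tside N TE e a) | e a. e \<in> TE \<and> a \<in> e}
        \<subseteq> (\<lambda>p. h (\<beta> ` tside N TE (fst p) (snd p))) ` (Pow N \<times> N)"
  proof
    fix x assume "x \<in> {h (\<beta> ` tside N TE e a) | e a. e \<in> TE \<and> a \<in> e}"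
    then obtain e a where ea: "e \<in> TE" "a \<in> e" "x = h (\<beta> ` tside N TE e a)" by blast
    then have mem: "(e, a) \<in> Pow N \<times> N" using TE by auto
    show "x \<in> (\<lambda>p. h (\<beta> ` tside N TE (fst p) (snd p))) ` (Pow N \<times> N)"
    proof (rule image_eqI[where x="(e,a)"])
      show "x = h (\<beta> ` tside N TE (fst (e, a)) (snd (e, a)))" using ea(3) by simp
    qed (rule mem)
  qed
  moreover have "finite (Pow N \<times> N)" using fN by simp
  ultimately show ?thesis by (meson finite_imageI finite_subset)
qed

lemma width_le:
  assumes L: "is_layout U N TE \<beta>" and fg: "\<And>X. g X \<le> 2 * f X"
  shows "layout_width_of g N TE \<beta> \<le> 2 * layout_width_of f N TE \<beta>"
proof -
  let ?Sg = "{g (\<beta> ` tside N TE e a) | e a. e \<in> TE \<and> a \<in> e}"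
  let ?Sf = "{f (\<beta> ` tside N TE e a) | e a. e \<in> TE \<and> a \<in> e}"
  have fg': "finite (insert 0 ?Sg)" using fin_sides[OF L, of g] by simp
  have ff': "finite (insert 0 ?Sf)" using fin_sides[OF L, of f] by simp
  have "\<forall>x\<in>insert 0 ?Sg. x \<le> 2 * Max (insert 0 ?Sf)"
  proof
    fix x assume "x \<in> insert 0 ?Sg"
    then consider "x = 0" | e a where "e \<in> TE" "a \<in> e" "x = g (\<beta> ` tside N TE e a)" by blast
    then show "x \<le> 2 * Max (insert 0 ?Sf)"
    proof cases
      case 1 then show ?thesis by simp
    next
      case 2
      have "f (\<beta> ` tside N TE e a) \<in> insert 0 ?Sf" using 2 by blast
      then have "f (\<beta> ` tside N TE e a) \<le> Max (insert 0 ?Sf)"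
        using ff' by (rule Max_ge[rotated])
      then show ?thesis using 2 fg[of "\<beta> ` tside N TE e a"] by linarith
    qed
  qed
  then have "Max (insert 0 ?Sg) \<le> 2 * Max (insert 0 ?Sf)"
    using fg' by (subst Max_le_iff) auto
  then show ?thesis unfolding layout_width_of_def .
qed

theorem mainTheorem2:
  fixes V :: "'v set" and E :: "'e set" and tail head :: "'e \<Rightarrow> 'v" and k :: nat
  assumes "digraph V E tail head"
    and "dbw E tail head \<le> k"
  shows "bcrk E (line_adj E tail head) \<le> 2 * (k + 1)"
proof -
  have fE: "finite E" using assms(1) by (simp add: digraph_def)
  define S where "S = {layout_width_of (fD E tail head) N TE \<beta> | N TE \<beta>. is_layout E N TE \<beta>}"
  define T where "T = {layout_width_of (bicut_rank E (line_adj E tail head)) N TE \<beta> | N TE \<beta>. is_layout E N TE \<beta>}"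
  have bT: "bcrk E (line_adj E tail head) = Inf T" unfolding bcrk_def layout_width_def T_def ..
  have dS: "dbw E tail head = Inf S" unfolding dbw_def layout_width_def S_def ..
  show ?thesis
  proof (cases "S = {}")
    case True
    then have "T = {}" unfolding S_def T_def by blast
    then show ?thesis using bT dS True assms(2) by simp
  next
    case False
    from Inf_nat_def1[OF False] have "Inf S \<in> S" .
    then obtain N TE \<beta> where L: "is_layout E N TE \<beta>"
      and eq: "Inf S = layout_width_of (fD E tail head) N TE \<beta>" unfolding S_def by blast
    have w: "layout_width_of (fD E tail head) N TE \<beta> \<le> k"
      using assms(2) eq dS by simp
    have m: "layout_width_of (bicut_rank E (line_adj E tail head)) N TE \<beta> \<in> T"
      unfolding T_def using L by blast
    have "bcrk E (line_adj E tail head) \<le> layout_width_of (bicut_rank E (line_adj E tail head)) N TE \<beta>"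
      unfolding bT by (rule cInf_lower[OF m]) simp
    also have "\<dots> \<le> 2 * layout_width_of (fD E tail head) N TE \<beta>"
      by (rule width_le[OF L bicut_le[OF fE]])
    finally show ?thesis using w by (meson le_trans mult_le_mono2 le_add1)
  qed
qed

end
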